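(* Let $H(p,x,\omega)$ be quasiconvex satisfying (A1)–(A3), with effective Hamiltonian $\overline H$. Fix $p_0\in\mathbb R^d$. Then there is an event $\widetilde\Omega\subseteq\Omega$ with $\mathbb P[\widetilde\Omega]=1$ such that for every $(\epsilon,R,\omega)\in(0,1)\times(0,\infty)\times\widetilde\Omega$ there is $\gamma_0=\gamma_0(p_0,\epsilon,R,\omega)>0$ such that for all $0<\lambda<\gamma_0$ and all $x\in B_{R/\lambda}(0)$, $$p_0+D^-v_\lambda(x,p_0,\omega)\subseteq\{q\in\mathbb R^d:H(q,x,\omega)<\overline H(p_0)+\epsilon\},$$ where $v_\lambda(x,p_0,\omega)$ is the unique viscosity solution of $\lambda v_\lambda+H(p_0+Dv_\lambda,x,\omega)=0$ in $\mathbb R^d$.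
   Context: Setting: $(\Omega,\mathcal F,\mathbb P)$ is a probability space with an ergodic group $\{\tau_x\}_{x\in\mathbb R^d}$ of measure-preserving maps ($\tau_{y+z}=\tau_y\circ\tau_z$). (A1) $H(p,y,\tau_z\omega)=H(p,y+z,\omega)$; (A2) $\liminf_{|p|\to\infty}\operatorname{ess\,inf}_{(x,\omega)}|H(p,x,\omega)|=\infty$; (A3) for each $\omega$ and compact $K$ there is a modulus $\rho$ with $|H(p,x,\omega)-H(q,y,\omega)|\le\rho(|p-q|+|x-y|)$ for $p,q\in K$, $x,y\in\mathbb R^d$, and $H$ bounded on $K\times\mathbb R^d\times\Omega$. Quasiconvex: for each $(x,\omega)$, $p\mapsto H(p,x,\omega)$ has convex sublevel sets. A quasiconvex $H$ satisfying (A1)–(A3) is (by known results) regularly homogenizable at every $p$: there is $\overline H(p)$ with $\mathbb P[\limsup_{\lambda\to0}\max_{|x|\le R/\lambda}|\lambda v_\lambda(x,p,\omega)+\overline H(p)|=0\ \forall R>0]=1$; $\overline H$ is the effective Hamiltonian. For continuous $f$, $D^-f(x_0)=\{p:\liminf_{x\to x_0}\frac{f(x)-f(x_0)-p\cdot(x-x_0)}{|x-x_0|}\ge0\}$. *)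

theory Defs
  imports "HOL-Probability.Probability"
begin

definition measure_preserving_map :: "'w measure \<Rightarrow> ('w \<Rightarrow> 'w) \<Rightarrow> bool" where
  "measure_preserving_map M T \<longleftrightarrow> T \<in> measurable M M \<and> distr M M T = M"

definition ergodic_group :: "'w measure \<Rightarrow> ('a::euclidean_space \<Rightarrow> 'w \<Rightarrow> 'w) \<Rightarrow> bool" where
  "ergodic_group M \<tau> \<longleftrightarrow>
     (\<forall>x. measure_preserving_map M (\<tau> x)) \<and>
     (\<forall>\<omega>\<in>space M. \<tau> 0 \<omega> = \<omega>) \<and>
     (\<forall>y z. \<forall>\<omega>\<in>space M. \<tau> (y + z) \<omega> = \<tau> y (\<tau> z \<omega>)) \<and>
     (\<forall>A\<in>sets M. (\<forall>x. \<tau> x -` A \<inter> space M = A) \<longrightarrow>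
        measure M A = 0 \<or> measure M A = 1)"

definition modulus :: "(real \<Rightarrow> real) \<Rightarrow> bool" where
  "modulus \<rho> \<longleftrightarrow> (\<forall>r\<ge>0. \<rho> r \<ge> 0) \<and> \<rho> 0 = 0 \<and> (\<rho> \<longlongrightarrow> 0) (at_right 0)"

definition A1 :: "'w measure \<Rightarrow> ('a::euclidean_space \<Rightarrow> 'w \<Rightarrow> 'w) \<Rightarrow> ('a \<Rightarrow> 'a \<Rightarrow> 'w \<Rightarrow> real) \<Rightarrow> bool" where
  "A1 M \<tau> H \<longleftrightarrow> (\<forall>p y z. \<forall>\<omega>\<in>space M. H p y (\<tau> z \<omega>) = H p (y + z) \<omega>)"

text \<open>(A2) uniform coercivity: liminf as |p| goes to infinity of the essential infimum
  over (x,omega) (w.r.t. Lebesgue times P) of |H(p,x,omega)| is infinite.\<close>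
definition A2 :: "'w measure \<Rightarrow> ('a::euclidean_space \<Rightarrow> 'a \<Rightarrow> 'w \<Rightarrow> real) \<Rightarrow> bool" where
  "A2 M H \<longleftrightarrow> (\<forall>C::real. \<exists>K. \<forall>p. norm p \<ge> K \<longrightarrow>
      (AE z in (lborel \<Otimes>\<^sub>M M). C \<le> \<bar>H p (fst z) (snd z)\<bar>))"

definition A3 :: "'w measure \<Rightarrow> ('a::euclidean_space \<Rightarrow> 'a \<Rightarrow> 'w \<Rightarrow> real) \<Rightarrow> bool" where
  "A3 M H \<longleftrightarrow>
     (\<forall>\<omega>\<in>space M. \<forall>K. compact K \<longrightarrow> (\<exists>\<rho>. modulus \<rho> \<and>
        (\<forall>p\<in>K. \<forall>q\<in>K. \<forall>x y. \<bar>H p x \<omega> - H q y \<omega>\<bar> \<le> \<rho> (norm (p - q) + norm (x - y))))) \<and>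
     (\<forall>K. compact K \<longrightarrow> (\<exists>C. \<forall>p\<in>K. \<forall>x. \<forall>\<omega>\<in>space M. \<bar>H p x \<omega>\<bar> \<le> C))"

definition quasiconvex_H :: "'w measure \<Rightarrow> ('a::euclidean_space \<Rightarrow> 'a \<Rightarrow> 'w \<Rightarrow> real) \<Rightarrow> bool" where
  "quasiconvex_H M H \<longleftrightarrow> (\<forall>x. \<forall>\<omega>\<in>space M. \<forall>c. convex {p. H p x \<omega> \<le> c})"

definition C1_grad :: "('a::euclidean_space \<Rightarrow> real) \<Rightarrow> ('a \<Rightarrow> 'a) \<Rightarrow> bool" where
  "C1_grad \<phi> D\<phi> \<longleftrightarrow> (\<forall>x. (\<phi> has_derivative (\<lambda>h. D\<phi> x \<bullet> h)) (at x)) \<and> continuous_on UNIV D\<phi>"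

definition visc_sub :: "('a::euclidean_space \<Rightarrow> real \<Rightarrow> 'a \<Rightarrow> real) \<Rightarrow> ('a \<Rightarrow> real) \<Rightarrow> bool" where
  "visc_sub F u \<longleftrightarrow> continuous_on UNIV u \<and>
     (\<forall>\<phi> D\<phi> x0. C1_grad \<phi> D\<phi> \<and> (\<exists>e>0. \<forall>y\<in>ball x0 e. u y - \<phi> y \<le> u x0 - \<phi> x0)
        \<longrightarrow> F x0 (u x0) (D\<phi> x0) \<le> 0)"

definition visc_super :: "('a::euclidean_space \<Rightarrow> real \<Rightarrow> 'a \<Rightarrow> real) \<Rightarrow> ('a \<Rightarrow> real) \<Rightarrow> bool" where
  "visc_super F u \<longleftrightarrow> continuous_on UNIV u \<and>
     (\<forall>\<phi> D\<phi> x0. C1_grad \<phi> D\<phi> \<and> (\<exists>e>0. \<forall>y\<in>ball x0 e. u y - \<phi> y \<ge> u x0 - \<phi> x0)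
        \<longrightarrow> F x0 (u x0) (D\<phi> x0) \<ge> 0)"

definition visc_sol :: "('a::euclidean_space \<Rightarrow> real \<Rightarrow> 'a \<Rightarrow> real) \<Rightarrow> ('a \<Rightarrow> real) \<Rightarrow> bool" where
  "visc_sol F u \<longleftrightarrow> visc_sub F u \<and> visc_super F u"

definition subdiff :: "('a::euclidean_space \<Rightarrow> real) \<Rightarrow> 'a \<Rightarrow> 'a set" where
  "subdiff f x0 = {p. Liminf (at x0)
      (\<lambda>x. ereal ((f x - f x0 - p \<bullet> (x - x0)) / norm (x - x0))) \<ge> 0}"

definition is_discounted_sol ::
  "'w measure \<Rightarrow> ('a::euclidean_space \<Rightarrow> 'a \<Rightarrow> 'w \<Rightarrow> real) \<Rightarrow> (real \<Rightarrow> 'a \<Rightarrow> 'a \<Rightarrow> 'w \<Rightarrow> real) \<Rightarrow> bool" where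
  "is_discounted_sol M H v \<longleftrightarrow>
     (\<forall>l>0. \<forall>p. \<forall>\<omega>\<in>space M.
        bounded (range (\<lambda>x. v l x p \<omega>)) \<and>
        visc_sol (\<lambda>x r q. l * r + H (p + q) x \<omega>) (\<lambda>x. v l x p \<omega>))"

definition reg_homog ::
  "'w measure \<Rightarrow> (real \<Rightarrow> 'a::euclidean_space \<Rightarrow> 'a \<Rightarrow> 'w \<Rightarrow> real) \<Rightarrow> 'a \<Rightarrow> real \<Rightarrow> bool" where
  "reg_homog M v p Hb \<longleftrightarrow>
     (AE \<omega> in M. \<forall>R>0. \<forall>e>0. \<exists>\<gamma>>0. \<forall>l. 0 < l \<and> l < \<gamma> \<longrightarrow>
        (\<forall>x. norm x \<le> R / l \<longrightarrow> \<bar>l * v l x p \<omega> + Hb\<bar> \<le> e))"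

end

theory Submission
  imports Defs
begin

lemma AE_lborel_cont:
  fixes f :: "'a::euclidean_space \<Rightarrow> real"
  assumes cont: "continuous_on UNIV f" and ae: "AE x in lborel. c \<le> f x"
  shows "c \<le> f x"
proof (rule ccontr)
  assume "\<not> c \<le> f x"
  define S where "S = f -` {..<c}"
  have "open S" unfolding S_def using cont open_vimage open_lessThan by blast
  have "x \<in> S" using \<open>\<not> c \<le> f x\<close> by (auto simp: S_def)
  obtain N where N: "N \<in> null_sets lborel" "{x \<in> space lborel. \<not> c \<le> f x} \<subseteq> N"
    using ae unfolding eventually_ae_filter by auto
  have "S \<subseteq> N" using N(2) by (auto simp: S_def)
  have "S \<in> sets lborel" using \<open>open S\<close> by simp
  then have "S \<in> null_sets lborel" using null_sets_subset[OF N(1)] \<open>S \<subseteq> N\<close> by blast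
  then have "S \<in> null_sets lebesgue" by (simp add: null_sets_completionI)
  then have "negligible S" by (simp add: negligible_iff_null_sets)
  moreover have "\<not> negligible S" using open_not_negligible \<open>open S\<close> \<open>x \<in> S\<close> by blast
  ultimately show False by blast
qed

lemma C1_test:
  fixes e x0 :: "'a::euclidean_space"
  assumes e1: "norm e = 1"
  defines "yv \<equiv> \<lambda>x. (x - x0) - (e \<bullet> (x - x0)) *\<^sub>R e"
  shows "C1_grad (\<lambda>x. c * (e \<bullet> (x - x0)) + M * (yv x \<bullet> yv x) + B * exp (- L * (e \<bullet> (x - x0) + r)))
           (\<lambda>x. (c - L * (B * exp (- L * (e \<bullet> (x - x0) + r)))) *\<^sub>R e + (2 * M) *\<^sub>R yv x)"
proof -
  have ee: "e \<bullet> e = 1" using e1 by (simp add: dot_square_norm)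
  have ye: "yv x \<bullet> e = 0" for x unfolding yv_def by (simp add: inner_diff_left inner_diff_right inner_commute ee)
  have D: "((\<lambda>x. c * (e \<bullet> (x - x0)) + M * (yv x \<bullet> yv x) + B * exp (- L * (e \<bullet> (x - x0) + r)))
      has_derivative (\<lambda>h. ((c - L * (B * exp (- L * (e \<bullet> (x - x0) + r)))) *\<^sub>R e + (2 * M) *\<^sub>R yv x) \<bullet> h)) (at x)" for x
  proof -
    have "((\<lambda>x. c * (e \<bullet> (x - x0)) + M * (yv x \<bullet> yv x) + B * exp (- L * (e \<bullet> (x - x0) + r)))
      has_derivative (\<lambda>h. c * (e \<bullet> h) + M * (yv x \<bullet> (h - (e \<bullet> h) *\<^sub>R e) + (h - (e \<bullet> h) *\<^sub>R e) \<bullet> yv x)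
          + B * (exp (- L * (e \<bullet> (x - x0) + r)) * (- L * (e \<bullet> h))))) (at x)"
      unfolding yv_def
      by (rule derivative_eq_intros refl | simp)+ (simp add: algebra_simps)
    moreover have "(\<lambda>h. c * (e \<bullet> h) + M * (yv x \<bullet> (h - (e \<bullet> h) *\<^sub>R e) + (h - (e \<bullet> h) *\<^sub>R e) \<bullet> yv x)
          + B * (exp (- L * (e \<bullet> (x - x0) + r)) * (- L * (e \<bullet> h))))
       = (\<lambda>h. ((c - L * (B * exp (- L * (e \<bullet> (x - x0) + r)))) *\<^sub>R e + (2 * M) *\<^sub>R yv x) \<bullet> h)"
      using ye[of x] by (auto simp: inner_diff_right inner_diff_left inner_add_left inner_commute algebra_simps)
    ultimately show ?thesis by simp
  qed
  show ?thesis unfolding C1_grad_def yv_def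
    using D unfolding yv_def by (auto intro!: continuous_intros)
qed

lemma touch:
  fixes u :: "'a::euclidean_space \<Rightarrow> real" and e q x0 :: 'a
  assumes cont: "continuous_on UNIV u" and bnd: "\<And>x. \<bar>u x\<bar> \<le> Bu"
    and sub: "q \<in> subdiff u x0" and e1: "norm e = 1" and cq: "e \<bullet> q < c"
    and r0: "r0 > 0"
  shows "\<exists>xs \<phi> D\<phi>. C1_grad \<phi> D\<phi> \<and> (\<exists>d>0. \<forall>y\<in>ball xs d. u y - \<phi> y \<le> u xs - \<phi> xs)
     \<and> dist xs x0 < r0 \<and> e \<bullet> D\<phi> xs \<le> c"
proof -
  define \<epsilon> where "\<epsilon> = (c - e \<bullet> q) / 4"
  have \<epsilon>0: "\<epsilon> > 0" using cq by (simp add: \<epsilon>_def)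
  have ee: "e \<bullet> e = 1" using e1 by (simp add: dot_square_norm)
  have lim: "0 \<le> Liminf (at x0) (\<lambda>x. ereal ((u x - u x0 - q \<bullet> (x - x0)) / norm (x - x0)))"
    using sub by (simp add: subdiff_def)
  have "eventually (\<lambda>x. ereal (- \<epsilon>) < ereal ((u x - u x0 - q \<bullet> (x - x0)) / norm (x - x0))) (at x0)"
  proof -
    have "ereal (- \<epsilon>) < 0" using \<epsilon>0 by simp
    then show ?thesis using lim unfolding le_Liminf_iff by blast
  qed
  then obtain r1 where r1: "r1 > 0" and
    hr1: "\<And>x. x \<noteq> x0 \<Longrightarrow> dist x x0 < r1 \<Longrightarrow> - \<epsilon> < (u x - u x0 - q \<bullet> (x - x0)) / norm (x - x0)"
    unfolding eventually_at by auto
  define r where "r = min (r1/2) (r0/4)"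
  have r: "r > 0" "r < r1" "r \<le> r0/4" using r1 r0 by (auto simp: r_def)
  have "isCont u x0" using cont by (simp add: continuous_on_eq_continuous_at)
  then obtain \<rho>1 where \<rho>1: "\<rho>1 > 0" and h\<rho>1: "\<And>x. dist x x0 < \<rho>1 \<Longrightarrow> dist (u x) (u x0) < \<epsilon> * r"
    unfolding continuous_at_eps_delta using \<epsilon>0 r by (metis mult_pos_pos)
  define \<rho> where "\<rho> = min \<rho>1 (r0/4)"
  have \<rho>: "\<rho> > 0" "\<rho> \<le> \<rho>1" "\<rho> \<le> r0/4" using \<rho>1 r0 by (auto simp: \<rho>_def)
  have Bu0: "Bu \<ge> 0" using bnd[of x0] by linarith
  define Kb where "Kb = 2 * Bu + 2 * r * \<bar>c\<bar> + 1"
  have rc0: "0 \<le> 2*r*\<bar>c\<bar>" using r(1) by simp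
  have Kb: "Kb > 0" using Bu0 rc0 unfolding Kb_def by linarith
  define M where "M = Kb / \<rho>^2"
  define B where "B = \<epsilon> * r"
  have B0: "B > 0" using \<epsilon>0 r by (simp add: B_def)
  define L where "L = (Kb / B) / r"
  have L0: "L > 0" using Kb B0 r by (simp add: L_def)
  define sv where "sv = (\<lambda>x. e \<bullet> (x - x0))"
  define yv where "yv = (\<lambda>x. (x - x0) - (e \<bullet> (x - x0)) *\<^sub>R e)"
  define \<Psi> where "\<Psi> = (\<lambda>s. B * exp (- L * (s + r)))"
  define \<phi> where "\<phi> = (\<lambda>x. c * (e \<bullet> (x - x0)) + M * (yv x \<bullet> yv x) + B * exp (- L * (e \<bullet> (x - x0) + r)))"
  define D\<phi> where "D\<phi> = (\<lambda>x. (c - L * (B * exp (- L * (e \<bullet> (x - x0) + r)))) *\<^sub>R e + (2 * M) *\<^sub>R yv x)"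
  have C1: "C1_grad \<phi> D\<phi>" unfolding \<phi>_def D\<phi>_def yv_def by (rule C1_test[OF e1])
  have ye: "yv x \<bullet> e = 0" for x unfolding yv_def by (simp add: inner_diff_left inner_diff_right inner_commute ee)
  have dec: "x - x0 = sv x *\<^sub>R e + yv x" for x by (simp add: sv_def yv_def)
  have nrm: "norm (x - x0) \<le> \<bar>sv x\<bar> + norm (yv x)" for x
    using norm_triangle_ineq[of "sv x *\<^sub>R e" "yv x"] dec[of x] e1 by simp
  have phi_eq: "\<phi> x = c * sv x + M * (norm (yv x))^2 + \<Psi> (sv x)" for x
    by (simp add: \<phi>_def sv_def \<Psi>_def power2_norm_eq_inner)
  define F where "F = (\<lambda>x. u x - \<phi> x)"
  define Dom where "Dom = {x. -2*r \<le> sv x \<and> sv x \<le> 0 \<and> norm (yv x) \<le> \<rho>}"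
  have cs: "continuous_on UNIV sv" "continuous_on UNIV yv" unfolding sv_def yv_def
    by (auto intro!: continuous_intros)
  have "closed Dom" unfolding Dom_def
    using cs by (auto intro!: closed_Collect_conj closed_Collect_le continuous_intros)
  moreover have "bounded Dom"
  proof -
    have "Dom \<subseteq> cball x0 (2*r + \<rho>)"
    proof
      fix x assume "x \<in> Dom"
      then have "norm (x - x0) \<le> 2*r + \<rho>" using nrm[of x] unfolding Dom_def by auto
      then show "x \<in> cball x0 (2*r + \<rho>)" by (simp add: dist_norm norm_minus_commute)
    qed
    then show ?thesis using bounded_cball bounded_subset by blast
  qed
  ultimately have "compact Dom" using compact_eq_bounded_closed by blast
  define x1 where "x1 = x0 - r *\<^sub>R e"
  have sx1: "sv x1 = - r" and yx1: "yv x1 = 0" by (simp_all add: x1_def sv_def yv_def ee)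
  have x1D: "x1 \<in> Dom" using sx1 yx1 r \<rho> by (simp add: Dom_def)
  have "continuous_on Dom F" unfolding F_def using C1 cont
    by (intro continuous_intros continuous_on_subset[OF cont])
       (auto simp: \<phi>_def yv_def intro!: continuous_intros)
  then obtain xs where xsD: "xs \<in> Dom" and xsmax: "\<And>z. z \<in> Dom \<Longrightarrow> F z \<le> F xs"
    using continuous_attains_sup[OF \<open>compact Dom\<close>] x1D by blast
  have nx1: "norm (x1 - x0) = r" using r e1 by (simp add: x1_def)
  have "- \<epsilon> < (u x1 - u x0 - q \<bullet> (x1 - x0)) / norm (x1 - x0)"
    using hr1[of x1] nx1 r by (auto simp: dist_norm)
  then have "- \<epsilon> * r < u x1 - u x0 - q \<bullet> (x1 - x0)" using nx1 r by (simp add: field_simps)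
  moreover have "q \<bullet> (x1 - x0) = - r * (e \<bullet> q)" by (simp add: x1_def inner_commute)
  ultimately have ux1: "u x1 > u x0 - r * (e \<bullet> q) - \<epsilon> * r" by simp
  have "F x1 = u x1 + c * r - B" using sx1 yx1 by (simp add: F_def phi_eq \<Psi>_def)
  also have "\<dots> > u x0 + 2 * \<epsilon> * r"
  proof -
    have "c * r = (e \<bullet> q) * r + 4 * (\<epsilon> * r)" by (simp add: \<epsilon>_def field_simps)
    then show ?thesis using ux1 unfolding B_def by (simp add: algebra_simps)
  qed
  finally have Fx1: "F x1 > u x0 + 2 * \<epsilon> * r" .
  have Fbound: "F x \<le> u x + 2 * r * \<bar>c\<bar> - M * (norm (yv x))^2 - \<Psi> (sv x)" if "x \<in> Dom" for x
  proof -
    have "- (c * sv x) \<le> 2 * r * \<bar>c\<bar>"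
    proof -
      have "\<bar>sv x\<bar> \<le> 2*r" using that by (auto simp: Dom_def)
      then have "\<bar>c * sv x\<bar> \<le> \<bar>c\<bar> * (2*r)" by (simp add: abs_mult mult_left_mono)
      then show ?thesis by (simp add: algebra_simps)
    qed
    then show ?thesis by (simp add: F_def phi_eq)
  qed
  have er0: "\<epsilon> * r > 0" using \<epsilon>0 r by simp
  have Psi0: "\<Psi> s \<ge> 0" for s using B0 by (simp add: \<Psi>_def)
  have M0: "M \<ge> 0" using Kb by (simp add: M_def)
  have notA: "sv xs \<noteq> -2*r"
  proof
    assume h: "sv xs = -2*r"
    have "\<Psi> (sv xs) = B * exp (Kb / B)" using h r L0 by (simp add: \<Psi>_def L_def)
    also have "\<dots> \<ge> B * (1 + Kb / B)" using B0 by (intro mult_left_mono) (auto simp: exp_ge_add_one_self)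
    also have "B * (1 + Kb / B) = B + Kb" using B0 by (simp add: field_simps)
    finally have "\<Psi> (sv xs) \<ge> Kb" using B0 by linarith
    then have "F xs < u x0" using Fbound[OF xsD] bnd[of xs] bnd[of x0] M0
    proof -
      have "0 \<le> M * (norm (yv xs))^2" using M0 by simp
      moreover have "u xs \<le> Bu" "- Bu \<le> u x0" using bnd[of xs] bnd[of x0] by auto
      ultimately show ?thesis using Fbound[OF xsD] \<open>\<Psi> (sv xs) \<ge> Kb\<close> unfolding Kb_def by linarith
    qed
    then show False using xsmax[OF x1D] Fx1 er0 by linarith
  qed
  have notB: "norm (yv xs) \<noteq> \<rho>"
  proof
    assume h: "norm (yv xs) = \<rho>"
    have "M * (norm (yv xs))^2 = Kb" using h \<rho> by (simp add: M_def)
    then have "F xs < u x0"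
    proof -
      have "u xs \<le> Bu" "- Bu \<le> u x0" using bnd[of xs] bnd[of x0] by auto
      then show ?thesis using Fbound[OF xsD] Psi0[of "sv xs"] \<open>M * (norm (yv xs))^2 = Kb\<close>
        unfolding Kb_def by linarith
    qed
    then show False using xsmax[OF x1D] Fx1 er0 by linarith
  qed
  have notC: "sv xs \<noteq> 0"
  proof
    assume h: "sv xs = 0"
    have ny: "norm (yv xs) < \<rho>" using notB xsD by (auto simp: Dom_def)
    have "norm (xs - x0) \<le> norm (yv xs)" using nrm[of xs] h by simp
    then have "dist xs x0 < \<rho>1" using ny \<rho> by (simp add: dist_norm)
    then have "u xs < u x0 + \<epsilon> * r" using h\<rho>1[of xs] by (simp add: dist_real_def abs_less_iff)
    moreover have "F xs \<le> u xs"
    proof -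
      have a: "0 \<le> M * (norm (yv xs))^2" using M0 by simp
      have "F xs = u xs - M * (norm (yv xs))^2 - \<Psi> 0" by (simp add: F_def phi_eq h)
      then show ?thesis using a Psi0[of 0] by linarith
    qed
    ultimately show False using xsmax[OF x1D] Fx1 er0 by linarith
  qed
  define Op where "Op = {x. -2*r < sv x \<and> sv x < 0 \<and> norm (yv x) < \<rho>}"
  have "open Op" unfolding Op_def using cs
    by (auto intro!: open_Collect_conj open_Collect_less continuous_intros)
  have xsO: "xs \<in> Op" using xsD notA notB notC by (auto simp: Dom_def Op_def)
  obtain d where d: "d > 0" "ball xs d \<subseteq> Op" using \<open>open Op\<close> xsO open_contains_ball by blast
  have OD: "Op \<subseteq> Dom" by (auto simp: Op_def Dom_def)
  have locmax: "\<forall>y\<in>ball xs d. u y - \<phi> y \<le> u xs - \<phi> xs"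
    using d OD xsmax by (auto simp: F_def)
  have "norm (xs - x0) < 2*r + \<rho>"
  proof -
    have "\<bar>sv xs\<bar> < 2*r" using xsO by (auto simp: Op_def)
    moreover have "norm (yv xs) < \<rho>" using xsO by (auto simp: Op_def)
    ultimately show ?thesis using nrm[of xs] by linarith
  qed
  then have dist: "dist xs x0 < r0" using r \<rho> by (simp add: dist_norm)
  have "e \<bullet> D\<phi> xs = c - L * (B * exp (- L * (e \<bullet> (xs - x0) + r)))"
    using ye[of xs] by (simp add: D\<phi>_def inner_add_right ee inner_commute)
  also have "\<dots> \<le> c" using L0 B0 by simp
  finally have "e \<bullet> D\<phi> xs \<le> c" .
  then show ?thesis using C1 locmax dist d by blast
qed

lemma modulus_small:
  assumes "modulus \<rho>" "\<delta> > 0"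
  shows "\<exists>r0>0. \<forall>t. 0 \<le> t \<and> t < r0 \<longrightarrow> \<rho> t < \<delta>"
proof -
  have "(\<rho> \<longlongrightarrow> 0) (at_right 0)" "\<rho> 0 = 0" using assms(1) by (auto simp: modulus_def)
  then have "eventually (\<lambda>t. \<rho> t < \<delta>) (at_right 0)"
    using assms(2) by (simp add: order_tendstoD(2))
  then obtain b where b: "b > 0" "\<And>t. t > 0 \<Longrightarrow> t < b \<Longrightarrow> \<rho> t < \<delta>"
    unfolding eventually_at_right_field by auto
  show ?thesis
  proof (intro exI[of _ b] conjI allI impI)
    fix t assume "0 \<le> t \<and> t < b"
    then show "\<rho> t < \<delta>" using b \<open>\<rho> 0 = 0\<close> assms(2) by (cases "t = 0") auto
  qed (use b in auto)
qed

lemma key: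
  fixes G :: "'a::euclidean_space \<Rightarrow> 'a \<Rightarrow> real" and u :: "'a \<Rightarrow> real"
  assumes l: "l > 0" and cont: "continuous_on UNIV u" and bnd: "\<And>x. \<bar>u x\<bar> \<le> Bu"
    and sub: "visc_sub (\<lambda>x r q. l * r + G q x) u"
    and qc: "\<And>x c. convex {p. G p x \<le> c}"
    and pcont: "\<And>x. continuous_on UNIV (\<lambda>p. G p x)"
    and unif: "\<And>K. compact K \<Longrightarrow> \<exists>\<rho>. modulus \<rho> \<and> (\<forall>p\<in>K. \<forall>x y. \<bar>G p x - G p y\<bar> \<le> \<rho> (norm (x - y)))"
    and coer: "\<And>C. \<exists>K. \<forall>p x. K \<le> norm p \<longrightarrow> C \<le> \<bar>G p x\<bar>"
    and qs: "q \<in> subdiff u x0"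
  shows "G q x0 \<le> - l * u x0"
proof (rule ccontr)
  define c0 where "c0 = - l * u x0"
  assume "\<not> G q x0 \<le> - l * u x0"
  then have gq: "G q x0 > c0" by (simp add: c0_def)
  define \<delta> where "\<delta> = (G q x0 - c0) / 3"
  have \<delta>0: "\<delta> > 0" using gq by (simp add: \<delta>_def)
  define S where "S = {p. G p x0 \<le> c0 + 2 * \<delta>}"
  have "convex S" unfolding S_def by (rule qc)
  have "closed S" unfolding S_def using pcont[of x0] by (intro closed_Collect_le) (auto intro: continuous_intros)
  have "q \<notin> S" using \<delta>0 gq by (simp add: S_def \<delta>_def field_simps)
  obtain a b where ab: "a \<bullet> q < b" "\<And>p. p \<in> S \<Longrightarrow> a \<bullet> p > b"
    using separating_hyperplane_closed_point[OF \<open>convex S\<close> \<open>closed S\<close> \<open>q \<notin> S\<close>] by blast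
  have "\<exists>a' b'. a' \<noteq> 0 \<and> a' \<bullet> q < b' \<and> (\<forall>p. a' \<bullet> p \<le> b' \<longrightarrow> p \<notin> S)"
  proof (cases "a = 0")
    case True
    then have "S = {}" using ab by fastforce
    obtain i :: 'a where "i \<in> Basis" using nonempty_Basis by blast
    then have "i \<noteq> 0" by auto
    then show ?thesis using \<open>S = {}\<close> by (intro exI[of _ i] exI[of _ "i \<bullet> q + 1"]) auto
  next
    case False
    then show ?thesis using ab by (intro exI[of _ a] exI[of _ b]) force
  qed
  then obtain a' b' where a': "a' \<noteq> 0" "a' \<bullet> q < b'" "\<And>p. a' \<bullet> p \<le> b' \<Longrightarrow> p \<notin> S" by blast
  define e where "e = a' /\<^sub>R norm a'"
  define c1 where "c1 = b' / norm a'"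
  have na: "norm a' > 0" using a' by simp
  have e1: "norm e = 1" using na by (simp add: e_def)
  have ep: "e \<bullet> p = (a' \<bullet> p) / norm a'" for p by (simp add: e_def divide_inverse_commute)
  have eq: "e \<bullet> q < c1" using a'(2) na by (simp add: ep c1_def divide_strict_right_mono)
  have half: "G p x0 > c0 + 2 * \<delta>" if "e \<bullet> p \<le> c1" for p
  proof -
    have "a' \<bullet> p \<le> b'" using that na by (simp add: ep c1_def divide_le_cancel)
    then show ?thesis using a'(3) by (force simp: S_def)
  qed
  define C where "C = \<bar>c0\<bar> + \<bar>\<delta>\<bar> + 1"
  obtain K where K: "\<And>p x. K \<le> norm p \<Longrightarrow> C \<le> \<bar>G p x\<bar>" using coer by blast
  define K2 where "K2 = max K (norm q) + 1"
  obtain \<rho> where \<rho>: "modulus \<rho>" "\<And>p x y. p \<in> cball 0 K2 \<Longrightarrow> \<bar>G p x - G p y\<bar> \<le> \<rho> (norm (x - y))"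
    using unif[of "cball 0 K2"] by auto
  obtain r0 where r0: "r0 > 0" "\<And>t. 0 \<le> t \<Longrightarrow> t < r0 \<Longrightarrow> \<rho> t < \<delta>"
    using modulus_small[OF \<rho>(1) \<delta>0] by auto
  have "isCont u x0" using cont by (simp add: continuous_on_eq_continuous_at)
  moreover have "\<delta> / l > 0" using \<delta>0 l by simp
  ultimately obtain r1 where r1: "r1 > 0" "\<And>x. dist x x0 < r1 \<Longrightarrow> dist (u x) (u x0) < \<delta> / l"
    unfolding continuous_at_eps_delta by metis
  define Half where "Half = {p. e \<bullet> p \<le> c1}"
  have Hx: "G p x > c0 + \<delta>" if x: "dist x x0 < r0" and p: "p \<in> Half" for x p
  proof -
    have small: "G p x > c0 + \<delta>" if "norm p \<le> K2" "p \<in> Half" for p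
    proof -
      have "\<bar>G p x - G p x0\<bar> \<le> \<rho> (norm (x - x0))" using \<rho>(2) that by auto
      moreover have "\<rho> (norm (x - x0)) < \<delta>" using r0(2) x by (simp add: dist_norm)
      moreover have "G p x0 > c0 + 2 * \<delta>" using half that by (simp add: Half_def)
      ultimately show ?thesis by linarith
    qed
    define A where "A = {p. G p x \<le> - C}"
    define B where "B = {p. c0 + \<delta> \<le> G p x}"
    have "closed A" unfolding A_def using pcont[of x] by (intro closed_Collect_le) (auto intro: continuous_intros)
    have "closed B" unfolding B_def using pcont[of x] by (intro closed_Collect_le) (auto intro: continuous_intros)
    have C1: "C > c0 + \<delta>" "- C < c0 + \<delta>" unfolding C_def by linarith+
    have cov: "Half \<subseteq> A \<union> B"
    proof
      fix p assume hp: "p \<in> Half"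
      show "p \<in> A \<union> B"
      proof (cases "norm p \<le> K2")
        case True then show ?thesis using small[OF _ hp] by (force simp: B_def)
      next
        case False
        then have "C \<le> \<bar>G p x\<bar>" using K by (simp add: K2_def)
        then show ?thesis using C1 by (auto simp: A_def B_def abs_if split: if_splits)
      qed
    qed
    have dis: "A \<inter> B \<inter> Half = {}" using C1 by (auto simp: A_def B_def)
    have qH: "q \<in> Half" using eq by (simp add: Half_def)
    have "norm q \<le> K2" by (simp add: K2_def)
    then have "q \<in> B" using small[of q] qH by (force simp: B_def)
    have "connected Half" unfolding Half_def by (intro convex_connected convex_halfspace_le)
    then have "A \<inter> Half = {}"
      using \<open>closed A\<close> \<open>closed B\<close> cov dis qH \<open>q \<in> B\<close> unfolding connected_closed by blast
    then have "p \<notin> A" using p by blast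
    show ?thesis
    proof (cases "norm p \<le> K2")
      case True then show ?thesis using small p by auto
    next
      case False
      then have "C \<le> \<bar>G p x\<bar>" using K by (simp add: K2_def)
      then show ?thesis using C1 \<open>p \<notin> A\<close> by (auto simp: A_def abs_if split: if_splits)
    qed
  qed
  obtain xs \<phi> D\<phi> where t: "C1_grad \<phi> D\<phi>" "\<exists>d>0. \<forall>y\<in>ball xs d. u y - \<phi> y \<le> u xs - \<phi> xs"
      "dist xs x0 < min r0 r1" "e \<bullet> D\<phi> xs \<le> c1"
    using touch[OF cont bnd qs e1 eq, of "min r0 r1"] r0 r1 by auto
  have "l * u xs + G (D\<phi> xs) xs \<le> 0" using sub t(1,2) unfolding visc_sub_def by blast
  moreover have "G (D\<phi> xs) xs > c0 + \<delta>" using Hx[of xs "D\<phi> xs"] t(3,4) by (simp add: Half_def)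
  moreover have "\<bar>u xs - u x0\<bar> < \<delta> / l" using r1(2)[of xs] t(3) by (simp add: dist_real_def)
  then have "l * \<bar>u xs - u x0\<bar> < \<delta>" using l by (simp add: field_simps)
  then have "l * u x0 - l * u xs < \<delta>"
  proof -
    have "l * (u x0 - u xs) \<le> l * \<bar>u xs - u x0\<bar>" using l by (intro mult_left_mono) auto
    then show ?thesis using \<open>l * \<bar>u xs - u x0\<bar> < \<delta>\<close> by (simp add: right_diff_distrib)
  qed
  ultimately show False by (simp add: c0_def)
qed

lemma AE_swap_lborel:
  fixes M :: "'w measure"
  assumes "prob_space M" and ae: "AE z in (lborel \<Otimes>\<^sub>M M). P (fst z) (snd z :: 'w)"
  shows "AE \<omega> in M. AE (x::'a::euclidean_space) in lborel. P x \<omega>"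
proof -
  interpret prob_space M by fact
  interpret P1: pair_sigma_finite lborel M
    by (simp add: pair_sigma_finite_def lborel.sigma_finite_measure_axioms sigma_finite_measure_axioms)
  interpret P2: pair_sigma_finite M lborel
    by (simp add: pair_sigma_finite_def lborel.sigma_finite_measure_axioms sigma_finite_measure_axioms)
  have "AE z in distr (M \<Otimes>\<^sub>M lborel) (lborel \<Otimes>\<^sub>M M) (\<lambda>(x, y). (y, x)). P (fst z) (snd z)"
    using ae P1.distr_pair_swap by metis
  then have "AE z in (M \<Otimes>\<^sub>M lborel). P (snd z) (fst z)"
    using AE_distrD[OF measurable_pair_swap'[of M lborel], of "\<lambda>z. P (fst z) (snd z)"]
    by (simp add: case_prod_beta)
  then show ?thesis using P2.AE_pair by fastforce
qed

lemma cont_from_mod: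
  fixes f :: "'b::metric_space \<Rightarrow> real"
  assumes "modulus \<rho>" "\<And>y. dist y z < 1 \<Longrightarrow> \<bar>f y - f z\<bar> \<le> \<rho> (dist y z)"
  shows "isCont f z"
  unfolding continuous_at_eps_delta
proof (intro allI impI)
  fix \<theta> :: real assume "\<theta> > 0"
  obtain r0 where r0: "r0 > 0" "\<And>t. 0 \<le> t \<Longrightarrow> t < r0 \<Longrightarrow> \<rho> t < \<theta>"
    using modulus_small[OF assms(1) \<open>\<theta> > 0\<close>] by auto
  show "\<exists>d>0. \<forall>y. dist y z < d \<longrightarrow> dist (f y) (f z) < \<theta>"
  proof (intro exI[of _ "min 1 r0"] conjI allI impI)
    fix y assume "dist y z < min 1 r0"
    then show "dist (f y) (f z) < \<theta>" using assms(2)[of y] r0(2)[of "dist y z"]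
      by (simp add: dist_real_def)
  qed (use r0 in auto)
qed

lemma A3_facts:
  fixes H :: "'a::euclidean_space \<Rightarrow> 'a \<Rightarrow> 'w \<Rightarrow> real"
  assumes "A3 M H" "\<omega> \<in> space M"
  shows "\<And>x. continuous_on UNIV (\<lambda>p. H p x \<omega>)"
    and "\<And>p. continuous_on UNIV (\<lambda>x. H p x \<omega>)"
    and "\<And>K. compact K \<Longrightarrow> \<exists>\<rho>. modulus \<rho> \<and> (\<forall>p\<in>K. \<forall>x y. \<bar>H p x \<omega> - H p y \<omega>\<bar> \<le> \<rho> (norm (x - y)))"
proof -
  have A: "\<And>K. compact K \<Longrightarrow> \<exists>\<rho>. modulus \<rho> \<and>
        (\<forall>p\<in>K. \<forall>q\<in>K. \<forall>x y. \<bar>H p x \<omega> - H q y \<omega>\<bar> \<le> \<rho> (norm (p - q) + norm (x - y)))"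
    using assms unfolding A3_def by blast
  show "continuous_on UNIV (\<lambda>p. H p x \<omega>)" for x
  proof (intro continuous_at_imp_continuous_on ballI)
    fix p1 :: 'a
    obtain \<rho> where \<rho>: "modulus \<rho>"
      "\<forall>p\<in>cball p1 1. \<forall>q\<in>cball p1 1. \<forall>x y. \<bar>H p x \<omega> - H q y \<omega>\<bar> \<le> \<rho> (norm (p - q) + norm (x - y))"
      using A[of "cball p1 1"] by auto
    show "isCont (\<lambda>p. H p x \<omega>) p1"
    proof (rule cont_from_mod[OF \<rho>(1)])
      fix y assume "dist y p1 < 1"
      then have "y \<in> cball p1 1" "p1 \<in> cball p1 1" by (auto simp: dist_commute)
      then show "\<bar>H y x \<omega> - H p1 x \<omega>\<bar> \<le> \<rho> (dist y p1)"
        using \<rho>(2)[rule_format, of y p1 x x] by (simp add: dist_norm)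
    qed
  qed
  show "continuous_on UNIV (\<lambda>x. H p x \<omega>)" for p
  proof (intro continuous_at_imp_continuous_on ballI)
    fix x1 :: 'a
    obtain \<rho> where \<rho>: "modulus \<rho>"
      "\<forall>p'\<in>{p}. \<forall>q\<in>{p}. \<forall>x y. \<bar>H p' x \<omega> - H q y \<omega>\<bar> \<le> \<rho> (norm (p' - q) + norm (x - y))"
      using A[of "{p}"] by auto
    show "isCont (\<lambda>x. H p x \<omega>) x1"
    proof (rule cont_from_mod[OF \<rho>(1)])
      fix y assume "dist y x1 < 1"
      show "\<bar>H p y \<omega> - H p x1 \<omega>\<bar> \<le> \<rho> (dist y x1)"
        using \<rho>(2)[rule_format, of p p y x1] by (simp add: dist_norm)
    qed
  qed
  show "\<exists>\<rho>. modulus \<rho> \<and> (\<forall>p\<in>K. \<forall>x y. \<bar>H p x \<omega> - H p y \<omega>\<bar> \<le> \<rho> (norm (x - y)))" if "compact K" for K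
    using A[OF that] by fastforce
qed

lemma coer_ae:
  fixes H :: "'a::euclidean_space \<Rightarrow> 'a \<Rightarrow> 'w \<Rightarrow> real"
  assumes P: "prob_space M" and a2: "A2 M H" and a3: "A3 M H"
  shows "AE \<omega> in M. \<forall>C. \<exists>K. \<forall>p x. K \<le> norm p \<longrightarrow> C \<le> \<bar>H p x \<omega>\<bar>"
proof -
  obtain D :: "'a set" where D: "countable D" "\<And>X. open X \<Longrightarrow> X \<noteq> {} \<Longrightarrow> \<exists>d\<in>D. d \<in> X"
    using countable_dense_setE by blast
  have "AE \<omega> in M. \<exists>K. \<forall>p x. K \<le> norm p \<longrightarrow> real n \<le> \<bar>H p x \<omega>\<bar>" for n :: nat
  proof -
    obtain K where K: "\<And>p. K \<le> norm p \<Longrightarrow> AE z in (lborel \<Otimes>\<^sub>M M). real n \<le> \<bar>H p (fst z) (snd z)\<bar>"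
      using a2 unfolding A2_def by (elim allE[of _ "real n"]) auto
    define D' where "D' = {d\<in>D. K \<le> norm d}"
    have "countable D'" using D(1) by (simp add: D'_def)
    have "\<forall>d\<in>D'. AE \<omega> in M. AE x in lborel. real n \<le> \<bar>H d x \<omega>\<bar>"
    proof
      fix d assume "d \<in> D'"
      then have "K \<le> norm d" by (simp add: D'_def)
      from K[OF this] show "AE \<omega> in M. AE x in lborel. real n \<le> \<bar>H d x \<omega>\<bar>"
        by (rule AE_swap_lborel[OF P, where P="\<lambda>x \<omega>. real n \<le> \<bar>H d x \<omega>\<bar>"])
    qed
    then have aeh: "AE \<omega> in M. \<forall>d\<in>D'. AE x in lborel. real n \<le> \<bar>H d x \<omega>\<bar>"
      by (simp only: AE_ball_countable[OF \<open>countable D'\<close>])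
    show ?thesis using AE_space aeh
    proof eventually_elim
      case (elim \<omega>)
      then have \<omega>: "\<omega> \<in> space M" and h: "\<forall>d\<in>D'. AE x in lborel. real n \<le> \<bar>H d x \<omega>\<bar>" by auto
      have hd: "real n \<le> \<bar>H d x \<omega>\<bar>" if "d \<in> D'" for d x
      proof (rule AE_lborel_cont[where f="\<lambda>x. \<bar>H d x \<omega>\<bar>"])
        show "continuous_on UNIV (\<lambda>x. \<bar>H d x \<omega>\<bar>)"
          using A3_facts(2)[OF a3 \<omega>, of d] by (intro continuous_intros)
        show "AE x in lborel. real n \<le> \<bar>H d x \<omega>\<bar>" using h that by blast
      qed
      have "real n \<le> \<bar>H p x \<omega>\<bar>" if p: "K + 1 \<le> norm p" for p x
      proof (rule ccontr)
        assume "\<not> real n \<le> \<bar>H p x \<omega>\<bar>"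
        define \<theta> where "\<theta> = real n - \<bar>H p x \<omega>\<bar>"
        have \<theta>: "\<theta> > 0" using \<open>\<not> real n \<le> \<bar>H p x \<omega>\<bar>\<close> by (simp add: \<theta>_def)
        have "isCont (\<lambda>p. H p x \<omega>) p" using A3_facts(1)[OF a3 \<omega>, of x]
          by (simp add: continuous_on_eq_continuous_at)
        then obtain \<eta> where \<eta>: "\<eta> > 0" "\<And>y. dist y p < \<eta> \<Longrightarrow> dist (H y x \<omega>) (H p x \<omega>) < \<theta>"
          unfolding continuous_at_eps_delta using \<theta> by blast
        obtain d where d: "d \<in> D" "d \<in> ball p (min 1 \<eta>)"
        proof -
          have "p \<in> ball p (min 1 \<eta>)" using \<eta> by simp
          then show ?thesis using D(2)[of "ball p (min 1 \<eta>)"] that by blast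
        qed
        have "dist p d < 1" "dist d p < \<eta>" using d by (auto simp: dist_commute)
        then have "K \<le> norm d" using p norm_triangle_ineq2[of p d] by (simp add: dist_norm)
        then have "d \<in> D'" using d by (simp add: D'_def)
        then have "real n \<le> \<bar>H d x \<omega>\<bar>" by (rule hd)
        moreover have "\<bar>H d x \<omega> - H p x \<omega>\<bar> < \<theta>" using \<eta>(2)[OF \<open>dist d p < \<eta>\<close>] by (simp add: dist_real_def)
        ultimately show False unfolding \<theta>_def by linarith
      qed
      then show "\<exists>K. \<forall>p x. K \<le> norm p \<longrightarrow> real n \<le> \<bar>H p x \<omega>\<bar>" by blast
    qed
  qed
  then have "AE \<omega> in M. \<forall>n::nat. \<exists>K. \<forall>p x. K \<le> norm p \<longrightarrow> real n \<le> \<bar>H p x \<omega>\<bar>"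
    by (simp add: AE_all_countable)
  then show ?thesis
  proof (rule eventually_mono)
    fix \<omega> assume h: "\<forall>n::nat. \<exists>K. \<forall>p x. K \<le> norm p \<longrightarrow> real n \<le> \<bar>H p x \<omega>\<bar>"
    show "\<forall>C. \<exists>K. \<forall>p x. K \<le> norm p \<longrightarrow> C \<le> \<bar>H p x \<omega>\<bar>"
    proof
      fix C :: real
      obtain K where "\<forall>p x. K \<le> norm p \<longrightarrow> real (nat \<lceil>C\<rceil>) \<le> \<bar>H p x \<omega>\<bar>" using h by blast
      moreover have "C \<le> real (nat \<lceil>C\<rceil>)" by linarith
      ultimately show "\<exists>K. \<forall>p x. K \<le> norm p \<longrightarrow> C \<le> \<bar>H p x \<omega>\<bar>"
        by (intro exI[of _ K] allI impI) (meson order_trans)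
    qed
  qed
qed


theorem mainTheorem10:
  fixes M :: "'w measure" and \<tau> :: "'a::euclidean_space \<Rightarrow> 'w \<Rightarrow> 'w"
    and H :: "'a \<Rightarrow> 'a \<Rightarrow> 'w \<Rightarrow> real" and Hbar :: "'a \<Rightarrow> real"
    and v :: "real \<Rightarrow> 'a \<Rightarrow> 'a \<Rightarrow> 'w \<Rightarrow> real" and p0 :: 'a
  assumes "prob_space M"
    and "ergodic_group M \<tau>"
    and "quasiconvex_H M H"
    and "A1 M \<tau> H" and "A2 M H" and "A3 M H"
    and "is_discounted_sol M H v"
    and "\<forall>p. reg_homog M v p (Hbar p)"
  shows "\<exists>\<Omega>t\<in>sets M. measure M \<Omega>t = 1 \<and>
     (\<forall>\<omega>\<in>\<Omega>t. \<forall>e. 0 < e \<and> e < 1 \<longrightarrow> (\<forall>R>0. \<exists>\<gamma>0>0. \<forall>l. 0 < l \<and> l < \<gamma>0 \<longrightarrow>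
        (\<forall>x\<in>ball 0 (R / l). \<forall>q\<in>subdiff (\<lambda>y. v l y p0 \<omega>) x.
            H (p0 + q) x \<omega> < Hbar p0 + e)))"
proof -
  interpret P: prob_space M by fact
  have ae1: "AE \<omega> in M. \<forall>C. \<exists>K. \<forall>p x. K \<le> norm p \<longrightarrow> C \<le> \<bar>H p x \<omega>\<bar>"
    using coer_ae[OF assms(1,5,6)] .
  have ae2: "AE \<omega> in M. \<forall>R>0. \<forall>e>0. \<exists>\<gamma>>0. \<forall>l. 0 < l \<and> l < \<gamma> \<longrightarrow>
        (\<forall>x. norm x \<le> R / l \<longrightarrow> \<bar>l * v l x p0 \<omega> + Hbar p0\<bar> \<le> e)"
    using assms(8) unfolding reg_homog_def by blast
  define Good where "Good = (\<lambda>\<omega>. (\<forall>C. \<exists>K. \<forall>p x. K \<le> norm p \<longrightarrow> C \<le> \<bar>H p x \<omega>\<bar>) \<and>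
     (\<forall>R>0. \<forall>e>0. \<exists>\<gamma>>0. \<forall>l. 0 < l \<and> l < \<gamma> \<longrightarrow>
        (\<forall>x. norm x \<le> R / l \<longrightarrow> \<bar>l * v l x p0 \<omega> + Hbar p0\<bar> \<le> e)))"
  have "AE \<omega> in M. Good \<omega>"
    using ae1 ae2 unfolding Good_def by eventually_elim auto
  then obtain N where N: "N \<in> null_sets M" "{\<omega> \<in> space M. \<not> Good \<omega>} \<subseteq> N"
    unfolding eventually_ae_filter by auto
  define \<Omega>t where "\<Omega>t = space M - N"
  have Ns: "N \<in> sets M" using N(1) by auto
  have "\<Omega>t \<in> sets M" unfolding \<Omega>t_def using Ns by auto
  moreover have "measure M \<Omega>t = 1"
    unfolding \<Omega>t_def using P.prob_compl[OF Ns] N(1) by (simp add: measure_eq_0_null_sets)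
  moreover have "\<forall>\<omega>\<in>\<Omega>t. \<forall>e. 0 < e \<and> e < 1 \<longrightarrow> (\<forall>R>0. \<exists>\<gamma>0>0. \<forall>l. 0 < l \<and> l < \<gamma>0 \<longrightarrow>
        (\<forall>x\<in>ball 0 (R / l). \<forall>q\<in>subdiff (\<lambda>y. v l y p0 \<omega>) x.
            H (p0 + q) x \<omega> < Hbar p0 + e))"
  proof (intro ballI allI impI)
    fix \<omega> and e R :: real assume \<omega>t: "\<omega> \<in> \<Omega>t" and e: "0 < e \<and> e < 1" and R: "R > 0"
    have \<omega>: "\<omega> \<in> space M" using \<omega>t by (simp add: \<Omega>t_def)
    have coer: "\<forall>C. \<exists>K. \<forall>p x. K \<le> norm p \<longrightarrow> C \<le> \<bar>H p x \<omega>\<bar>"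
      and hom: "\<forall>R>0. \<forall>e>0. \<exists>\<gamma>>0. \<forall>l. 0 < l \<and> l < \<gamma> \<longrightarrow>
        (\<forall>x. norm x \<le> R / l \<longrightarrow> \<bar>l * v l x p0 \<omega> + Hbar p0\<bar> \<le> e)"
    proof -
      have "Good \<omega>" using N(2) \<omega> \<omega>t by (auto simp: \<Omega>t_def)
      then show "\<forall>C. \<exists>K. \<forall>p x. K \<le> norm p \<longrightarrow> C \<le> \<bar>H p x \<omega>\<bar>"
        and "\<forall>R>0. \<forall>e>0. \<exists>\<gamma>>0. \<forall>l. 0 < l \<and> l < \<gamma> \<longrightarrow>
        (\<forall>x. norm x \<le> R / l \<longrightarrow> \<bar>l * v l x p0 \<omega> + Hbar p0\<bar> \<le> e)"
        unfolding Good_def by blast+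
    qed
    have "e/2 > 0" using e by simp
    obtain \<gamma> where \<gamma>: "\<gamma> > 0" "\<forall>l. 0 < l \<and> l < \<gamma> \<longrightarrow> (\<forall>x. norm x \<le> R / l \<longrightarrow>
        \<bar>l * v l x p0 \<omega> + Hbar p0\<bar> \<le> e/2)"
      using hom[rule_format, OF R \<open>e/2 > 0\<close>] by (elim exE conjE) auto
    show "\<exists>\<gamma>0>0. \<forall>l. 0 < l \<and> l < \<gamma>0 \<longrightarrow>
        (\<forall>x\<in>ball 0 (R / l). \<forall>q\<in>subdiff (\<lambda>y. v l y p0 \<omega>) x. H (p0 + q) x \<omega> < Hbar p0 + e)"
    proof (intro exI[of _ \<gamma>] conjI allI impI ballI)
      show "\<gamma> > 0" by fact
      fix l :: real and x q :: 'a assume l: "0 < l \<and> l < \<gamma>" and x: "x \<in> ball 0 (R / l)"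
        and q: "q \<in> subdiff (\<lambda>y. v l y p0 \<omega>) x"
      have sol: "bounded (range (\<lambda>x. v l x p0 \<omega>))"
        "visc_sol (\<lambda>x r q. l * r + H (p0 + q) x \<omega>) (\<lambda>x. v l x p0 \<omega>)"
        using assms(7) l \<omega> unfolding is_discounted_sol_def by blast+
      then have sub: "visc_sub (\<lambda>x r q. l * r + H (p0 + q) x \<omega>) (\<lambda>x. v l x p0 \<omega>)"
        by (simp add: visc_sol_def)
      then have cont: "continuous_on UNIV (\<lambda>x. v l x p0 \<omega>)" by (simp add: visc_sub_def)
      obtain Bu where Bu: "\<And>y. \<bar>v l y p0 \<omega>\<bar> \<le> Bu"
        using sol(1) unfolding bounded_iff by fastforce
      have qc: "convex {p. H (p0 + p) y \<omega> \<le> c}" for y c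
      proof -
        have "convex {P. H P y \<omega> \<le> c}" using assms(3) \<omega> unfolding quasiconvex_H_def by blast
        then have "convex ((+) (- p0) ` {P. H P y \<omega> \<le> c})" by (rule convex_translation)
        moreover have "(+) (- p0) ` {P. H P y \<omega> \<le> c} = {p. H (p0 + p) y \<omega> \<le> c}"
        proof (intro set_eqI iffI)
          fix p assume "p \<in> {p. H (p0 + p) y \<omega> \<le> c}"
          then show "p \<in> (+) (- p0) ` {P. H P y \<omega> \<le> c}"
            by (intro image_eqI[of _ _ "p0 + p"]) auto
        next
          fix p assume "p \<in> (+) (- p0) ` {P. H P y \<omega> \<le> c}"
          then show "p \<in> {p. H (p0 + p) y \<omega> \<le> c}" by auto
        qed
        ultimately show ?thesis by metis
      qed
      have pc: "continuous_on UNIV (\<lambda>p. H (p0 + p) y \<omega>)" for y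
        using continuous_on_compose2[OF A3_facts(1)[OF assms(6) \<omega>, of y], of UNIV "\<lambda>p. p0 + p"]
        by (simp add: continuous_on_add continuous_on_const continuous_on_id)
      have un: "\<exists>\<rho>. modulus \<rho> \<and> (\<forall>p\<in>K. \<forall>x y. \<bar>H (p0 + p) x \<omega> - H (p0 + p) y \<omega>\<bar> \<le> \<rho> (norm (x - y)))"
        if "compact K" for K
      proof -
        have "compact ((+) p0 ` K)" using compact_translation[OF that] .
        then obtain \<rho> where "modulus \<rho>" "\<forall>p\<in>(+) p0 ` K. \<forall>x y. \<bar>H p x \<omega> - H p y \<omega>\<bar> \<le> \<rho> (norm (x - y))"
          using A3_facts(3)[OF assms(6) \<omega>] by blast
        then show ?thesis by auto
      qed
      have co: "\<exists>K. \<forall>p y. K \<le> norm p \<longrightarrow> C \<le> \<bar>H (p0 + p) y \<omega>\<bar>" for C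
      proof -
        obtain K where K: "\<forall>p x. K \<le> norm p \<longrightarrow> C \<le> \<bar>H p x \<omega>\<bar>" using coer by blast
        show ?thesis
        proof (intro exI[of _ "K + norm p0"] allI impI)
          fix p y :: 'a assume "K + norm p0 \<le> norm p"
          then have "K \<le> norm (p0 + p)" using norm_triangle_ineq2[of p "- p0"] by (simp add: add.commute)
          then show "C \<le> \<bar>H (p0 + p) y \<omega>\<bar>" using K by blast
        qed
      qed
      have "H (p0 + q) x \<omega> \<le> - l * v l x p0 \<omega>"
        using key[where G="\<lambda>q x. H (p0 + q) x \<omega>" and u="\<lambda>x. v l x p0 \<omega>", OF _ cont Bu sub qc pc un co q] l
        by simp
      moreover have "norm x \<le> R / l" using x by simp
      then have "\<bar>l * v l x p0 \<omega> + Hbar p0\<bar> \<le> e/2" using \<gamma>(2) l by simp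
      then have "- (l * v l x p0 \<omega> + Hbar p0) \<le> e/2" by (rule abs_le_D2)
      ultimately show "H (p0 + q) x \<omega> < Hbar p0 + e" using e by linarith
    qed
  qed
  ultimately show ?thesis by blast
qed

end
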